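(* Consider the $n$-body problem in ${\bf S}^2$ with all masses equal. If $n$ is odd, the configuration in which the bodies are placed at the vertices of a regular $n$-gon inscribed in any great circle of ${\bf S}^2$ is a fixed point of the equations of motion. For $n=4$, the configuration in which the bodies are at the vertices of a regular tetrahedron inscribed in ${\bf S}^2$ (e.g. $(0,0,1)$, $(0,2\sqrt2/3,-1/3)$, $(-2/\sqrt6,-\sqrt2/3,-1/3)$, $(2/\sqrt6,-\sqrt2/3,-1/3)$) is also a fixed point.
   Context: The $n$-body problem in ${\bf S}^2$: bodies of masses $m_1,\dots,m_n>0$ have positions ${\bf q}_i=(x_i,y_i,z_i)\in\mathbb R^3$ on the unit sphere ${\bf S}^2=\{{\bf q}:{\bf q}\cdot{\bf q}=1\}$ ($\cdot$ the Euclidean inner product), and satisfy $$\ddot{\bf q}_i=\sum_{j\ne i}\frac{m_j[{\bf q}_j-({\bf q}_i\cdot{\bf q}_j){\bf q}_i]}{[1-({\bf q}_i\cdot{\bf q}_j)^2]^{3/2}}-(\dot{\bf q}_i\cdot\dot{\bf q}_i){\bf q}_i,\qquad {\bf q}_i\cdot{\bf q}_i=1,\ \ {\bf q}_i\cdot\dot{\bf q}_i=0,$$ $i=1,\dots,n$, defined only for configurations with $({\bf q}_i\cdot{\bf q}_j)^2\ne 1$ for all $i\ne j$. A fixed point is a configuration ${\bf q}^0$ (satisfying this nonsingularity condition) such that the constant function ${\bf q}(t)\equiv{\bf q}^0$ solves the equations, equivalently $\sum_{j\ne i}m_j[{\bf q}_j-({\bf q}_i\cdot{\bf q}_j){\bf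 q}_i]/[1-({\bf q}_i\cdot{\bf q}_j)^2]^{3/2}=0$ for every $i$. *)

theory Defs
  imports "HOL-Analysis.Analysis"
begin

text \<open>Configurations of n bodies on the unit sphere S^2 in R^3: positions q i, i < n,
  masses m i. The right-hand side of the equations of motion at zero velocity.\<close>

definition on_sphere :: "nat \<Rightarrow> (nat \<Rightarrow> real^3) \<Rightarrow> bool" where
  "on_sphere n q \<longleftrightarrow> (\<forall>i<n. q i \<bullet> q i = 1)"

definition nonsingular :: "nat \<Rightarrow> (nat \<Rightarrow> real^3) \<Rightarrow> bool" where
  "nonsingular n q \<longleftrightarrow> (\<forall>i<n. \<forall>j<n. i \<noteq> j \<longrightarrow> (q i \<bullet> q j)^2 \<noteq> 1)"

definition force :: "(nat \<Rightarrow> real) \<Rightarrow> nat \<Rightarrow> (nat \<Rightarrow> real^3) \<Rightarrow> nat \<Rightarrow> real^3" where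
  "force m n q i = (\<Sum>j\<in>{..<n} - {i}.
      (m j / (1 - (q i \<bullet> q j)^2) powr (3/2)) *\<^sub>R (q j - (q i \<bullet> q j) *\<^sub>R q i))"

definition fixed_point :: "(nat \<Rightarrow> real) \<Rightarrow> nat \<Rightarrow> (nat \<Rightarrow> real^3) \<Rightarrow> bool" where
  "fixed_point m n q \<longleftrightarrow> on_sphere n q \<and> nonsingular n q \<and> (\<forall>i<n. force m n q i = 0)"

end

theory Submission
  imports Defs
begin


lemma three_zero:
  fixes a b e s :: "real^3" and D :: real
  assumes "D \<noteq> 0" "a \<bullet> a = D" "b \<bullet> b = D" "e \<bullet> e = D"
    "a \<bullet> b = D/2" "a \<bullet> e = D/2" "b \<bullet> e = D/2"
    "a \<bullet> s = 0" "b \<bullet> s = 0" "e \<bullet> s = 0"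
  shows "s = 0"
proof -
  define M :: "real^3^3" where "M = vector [a,b,e]"
  have g: "(M ** transpose M) $ i $ j = M$i \<bullet> M$j" for i j
    by (simp add: matrix_matrix_mult_def transpose_def inner_vec_def mult.commute)
  have r: "M$1 = a" "M$2 = b" "M$3 = e" by (simp_all add: M_def)
  have "det (M ** transpose M) = D^3/2"
    unfolding det_3 g r by (simp add: inner_commute assms, simp add: power3_eq_cube field_simps)
  hence "det M * det M = D^3/2" by (simp add: det_mul det_transpose)
  hence "det M * det M \<noteq> 0" using assms(1) by (metis divide_eq_0_iff power_not_zero zero_neq_numeral)
  hence "invertible M" by (simp add: invertible_det_nz)
  then obtain B where "B ** M = mat 1" unfolding invertible_def by blast
  hence ker: "\<forall>x. M *v x = 0 \<longrightarrow> x = 0" using matrix_left_invertible_ker by blast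
  have mv: "(M *v s) $ i = M$i \<bullet> s" for i
    by (simp add: matrix_vector_mult_def inner_vec_def)
  have "M *v s = 0"
    unfolding vec_eq_iff by (simp add: forall_3 mv r assms)
  thus ?thesis using ker by blast
qed

lemma tetra:
  fixes q :: "nat \<Rightarrow> real^3" and d \<mu> :: real
  assumes d: "d > 0" and sph: "on_sphere 4 q"
    and dist: "\<forall>i<4. \<forall>j<4. i \<noteq> j \<longrightarrow> dist (q i) (q j) = d"
  shows "fixed_point (\<lambda>_. \<mu>) 4 q"
proof -
  define c where "c = 1 - d^2/2"
  have one: "q i \<bullet> q i = 1" if "i < 4" for i using sph that by (simp add: on_sphere_def)
  have dot: "q i \<bullet> q j = c" if "i < 4" "j < 4" "i \<noteq> j" for i j
  proof -
    have "d^2 = (q i - q j) \<bullet> (q i - q j)" using dist that by (simp add: dist_norm dot_square_norm)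
    also have "\<dots> = q i \<bullet> q i + q j \<bullet> q j - 2 * (q i \<bullet> q j)"
      by (simp add: inner_diff_left inner_diff_right inner_commute)
    finally show ?thesis using one that unfolding c_def by (simp add: field_simps)
  qed
  define s where "s = q 0 + q 1 + q 2 + q 3"
  have sq: "s \<bullet> q k = 1 + 3*c" if "k < 4" for k
  proof -
    have "k = 0 \<or> k = 1 \<or> k = 2 \<or> k = 3" using that by auto
    thus ?thesis unfolding s_def
      by (elim disjE) (simp_all add: inner_add_left one dot)
  qed
  have sq': "q k \<bullet> s = 1 + 3*c" if "k < 4" for k using sq[OF that] by (simp add: inner_commute)
  have s0: "s = 0"
  proof (rule three_zero[where a="q 1 - q 0" and b="q 2 - q 0" and e="q 3 - q 0" and D="d^2"])
    show "d^2 \<noteq> 0" using d by simp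
  qed (simp_all add: inner_diff_left inner_diff_right one dot sq' c_def)
  have c3: "c = -1/3" using sq[of 0] s0 by simp
  have ns: "nonsingular 4 q" unfolding nonsingular_def using dot c3 by (simp add: power2_eq_square)
  have f: "force (\<lambda>_. \<mu>) 4 q i = 0" if i: "i < 4" for i
  proof -
    define K where "K = \<mu> / (1 - c^2) powr (3/2)"
    have "force (\<lambda>_. \<mu>) 4 q i = (\<Sum>j\<in>{..<4} - {i}. K *\<^sub>R (q j + (1/3) *\<^sub>R q i))"
      unfolding force_def K_def by (rule sum.cong) (use i in \<open>auto simp: dot c3\<close>)
    also have "\<dots> = K *\<^sub>R ((\<Sum>j\<in>{..<4} - {i}. q j) + (\<Sum>j\<in>{..<4} - {i}. (1/3) *\<^sub>R q i))"
      by (simp only: scaleR_add_right scaleR_sum_right sum.distrib)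
    also have "(\<Sum>j\<in>{..<4} - {i}. (1/3) *\<^sub>R q i) = q i" using i by (simp only: sum_constant_scaleR card_Diff_singleton) (simp add: scaleR_scaleR)
    also have "(\<Sum>j\<in>{..<4} - {i}. q j) = s - q i"
    proof -
      have "(\<Sum>j\<in>{..<4::nat}. q j) = q i + (\<Sum>j\<in>{..<4} - {i}. q j)"
        using i by (subst sum.remove[of _ i]) auto
      moreover have "(\<Sum>j\<in>{..<4::nat}. q j) = s" unfolding s_def
        by (simp add: numeral_eq_Suc add.commute add.left_commute)
      ultimately show ?thesis by (simp add: algebra_simps)
    qed
    finally show ?thesis using s0 by simp
  qed
  show ?thesis unfolding fixed_point_def using sph ns f by blast
qed

lemma shift1:
  fixes F :: "real \<Rightarrow> real" and n :: nat
  assumes per: "\<And>x. F (x + real n) = F x" and n: "n > 0"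
  shows "(\<Sum>j<n. F (real j + 1)) = (\<Sum>j<n. F (real j))"
proof -
  obtain m where m: "n = Suc m" using n by (cases n) auto
  have "(\<Sum>j<n. F (real j + 1)) = (\<Sum>j<m. F (real j + 1)) + F (real m + 1)"
    by (simp add: m)
  also have "F (real m + 1) = F 0" using per[of 0] m by (simp add: add.commute)
  also have "(\<Sum>j<n. F (real j)) = F 0 + (\<Sum>j<m. F (real (Suc j)))"
    unfolding m using sum.lessThan_Suc_shift[of "\<lambda>j. F (real j)" m] by simp
  ultimately show ?thesis by (simp add: add.commute)
qed

lemma shifti:
  fixes F :: "real \<Rightarrow> real" and n :: nat
  assumes per: "\<And>x. F (x + real n) = F x" and n: "n > 0"
  shows "(\<Sum>j<n. F (real j - real i)) = (\<Sum>j<n. F (real j))"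
proof (induction i)
  case 0 then show ?case by simp
next
  case (Suc i)
  have "(\<Sum>j<n. (\<lambda>x. F (x - real (Suc i))) (real j + 1)) = (\<Sum>j<n. (\<lambda>x. F (x - real (Suc i))) (real j))"
  proof (rule shift1)
    fix x show "F (x + real n - real (Suc i)) = F (x - real (Suc i))"
      using per[of "x - real (Suc i)"] by (simp add: algebra_simps)
  qed (rule n)
  then show ?case using Suc by (simp add: algebra_simps)
qed

lemma oddsum:
  fixes F :: "real \<Rightarrow> real" and n :: nat
  assumes per: "\<And>x. F (x + real n) = F x" and odd: "\<And>x. F (-x) = - F x" and n: "n > 0"
  shows "(\<Sum>j<n. F (real j)) = 0"
proof -
  have "(\<Sum>j<n. F (real j)) = (\<Sum>j<n. F (real (n - Suc j)))"
    by (rule sum.nat_diff_reindex[symmetric])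
  also have "\<dots> = (\<Sum>j<n. - F (real j + 1))"
  proof (rule sum.cong)
    fix j assume "j \<in> {..<n}"
    hence e: "real (n - Suc j) = - (real j + 1) + real n" by (simp add: of_nat_diff)
    have "F (real (n - Suc j)) = F (- (real j + 1))" unfolding e by (rule per)
    also have "\<dots> = - F (real j + 1)" by (rule odd)
    finally show "F (real (n - Suc j)) = - F (real j + 1)" .
  qed simp
  also have "\<dots> = - (\<Sum>j<n. F (real j))" using shift1[of F n, OF per n] by (simp add: sum_negf)
  finally show ?thesis by simp
qed

lemma polygon:
  fixes u v :: "real^3" and n :: nat and \<phi> \<mu> :: real
  assumes on: "odd n" and uu: "u \<bullet> u = 1" and vv: "v \<bullet> v = 1" and uv: "u \<bullet> v = 0"
  shows "fixed_point (\<lambda>_. \<mu>) n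
      (\<lambda>k. cos (2 * pi * real k / real n + \<phi>) *\<^sub>R u + sin (2 * pi * real k / real n + \<phi>) *\<^sub>R v)"
    (is "fixed_point _ _ ?q")
proof -
  have n0: "n > 0" using on by (cases n) auto
  define \<theta> where "\<theta> k = 2 * pi * real k / real n + \<phi>" for k
  have qdef: "?q k = cos (\<theta> k) *\<^sub>R u + sin (\<theta> k) *\<^sub>R v" for k by (simp add: \<theta>_def)
  define t where "t i = (- sin (\<theta> i)) *\<^sub>R u + cos (\<theta> i) *\<^sub>R v" for i
  have vu: "v \<bullet> u = 0" using uv by (simp add: inner_commute)
  have dotq: "?q i \<bullet> ?q j = cos (\<theta> j - \<theta> i)" for i j
    unfolding qdef by (simp add: inner_add_left inner_add_right uu vv uv vu cos_diff algebra_simps)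
  have vec: "?q j - cos (\<theta> j - \<theta> i) *\<^sub>R ?q i = sin (\<theta> j - \<theta> i) *\<^sub>R t i" for i j
  proof -
    define \<alpha> where "\<alpha> = \<theta> j - \<theta> i"
    have "\<theta> j = \<theta> i + \<alpha>" by (simp add: \<alpha>_def)
    then show ?thesis unfolding qdef t_def \<alpha>_def[symmetric]
      by (simp add: cos_add sin_add algebra_simps)
  qed
  have dth: "\<theta> j - \<theta> i = 2 * pi * (real j - real i) / real n" for i j
    by (simp add: \<theta>_def diff_divide_distrib right_diff_distrib)
  define h where "h x = \<mu> / (1 - (cos x)^2) powr (3/2) * sin x" for x
  define F where "F x = h (2 * pi * x / real n)" for x
  have Fper: "F (x + real n) = F x" for x
  proof -
    have "2 * pi * (x + real n) / real n = 2 * pi * x / real n + 2 * pi" using n0 by (simp add: field_simps)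
    thus ?thesis unfolding F_def h_def by simp
  qed
  have Fodd: "F (- x) = - F x" for x unfolding F_def h_def by simp
  have F0: "F 0 = 0" unfolding F_def h_def by simp
  have sph: "on_sphere n ?q" unfolding on_sphere_def using dotq by simp
  have ns: "nonsingular n ?q" unfolding nonsingular_def
  proof (intro allI impI)
    fix i j assume ij: "i < n" "j < n" "i \<noteq> j"
    show "(?q i \<bullet> ?q j)^2 \<noteq> 1"
    proof
      assume "(?q i \<bullet> ?q j)^2 = 1"
      hence "(sin (\<theta> j - \<theta> i))^2 = 0" unfolding dotq using sin_cos_squared_add[of "\<theta> j - \<theta> i"] by simp
      hence "sin (2 * pi * (real j - real i) / real n) = 0" by (simp add: dth)
      then obtain k :: int where k: "2 * pi * (real j - real i) / real n = real_of_int k * pi"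
        by (auto simp: sin_zero_iff_int2)
      hence "pi * (2 * (real j - real i)) = pi * (real_of_int k * real n)" using n0 by (simp add: field_simps)
      hence "2 * (real j - real i) = real_of_int k * real n" by simp
      hence "of_int (2 * (int j - int i)) = (of_int (k * int n) :: real)" by simp
      hence eq: "2 * (int j - int i) = k * int n" by (simp only: of_int_eq_iff)
      have "int n dvd 2 * (int j - int i)" unfolding eq by simp
      moreover have "coprime (int n) 2" using on by (simp add: coprime_commute)
      ultimately have "int n dvd (int j - int i)" using coprime_dvd_mult_right_iff by blast
      moreover have "int j - int i \<noteq> 0" using ij by simp
      ultimately have "\<bar>int n\<bar> \<le> \<bar>int j - int i\<bar>" by (rule dvd_imp_le_int[rotated])
      thus False using ij by simp
    qed
  qed
  have f: "force (\<lambda>_. \<mu>) n ?q i = 0" if i: "i < n" for i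
  proof -
    have "force (\<lambda>_. \<mu>) n ?q i = (\<Sum>j\<in>{..<n} - {i}. F (real j - real i) *\<^sub>R t i)"
      unfolding force_def
    proof (rule sum.cong)
      fix j show "(\<mu> / (1 - (?q i \<bullet> ?q j)\<^sup>2) powr (3 / 2)) *\<^sub>R (?q j - (?q i \<bullet> ?q j) *\<^sub>R ?q i)
          = F (real j - real i) *\<^sub>R t i"
        unfolding dotq vec F_def h_def dth[symmetric] by simp
    qed simp
    also have "\<dots> = (\<Sum>j\<in>{..<n} - {i}. F (real j - real i)) *\<^sub>R t i"
      by (simp add: scaleR_sum_left)
    also have "(\<Sum>j\<in>{..<n} - {i}. F (real j - real i)) = (\<Sum>j<n. F (real j - real i))"
      using i F0 by (subst sum.remove[of "{..<n}" i]) auto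
    also have "\<dots> = (\<Sum>j<n. F (real j))" by (rule shifti[of F n, OF Fper n0])
    also have "\<dots> = 0" by (rule oddsum[of F n, OF Fper Fodd n0])
    finally show ?thesis by simp
  qed
  show ?thesis unfolding fixed_point_def using sph ns f by blast
qed

theorem mainTheorem3:
  fixes \<mu> :: real
  assumes "\<mu> > 0"
  shows "(\<forall>(n::nat) (u::real^3) v \<phi>. odd n \<longrightarrow> u \<bullet> u = 1 \<longrightarrow> v \<bullet> v = 1 \<longrightarrow> u \<bullet> v = 0 \<longrightarrow>
            fixed_point (\<lambda>_. \<mu>) n
              (\<lambda>k. cos (2 * pi * real k / real n + \<phi>) *\<^sub>R u + sin (2 * pi * real k / real n + \<phi>) *\<^sub>R v))
       \<and> (\<forall>(q::nat \<Rightarrow> real^3) d. d > 0 \<longrightarrow> on_sphere 4 q \<longrightarrow>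
            (\<forall>i<4. \<forall>j<4. i \<noteq> j \<longrightarrow> dist (q i) (q j) = d) \<longrightarrow>
            fixed_point (\<lambda>_. \<mu>) 4 q)"
  using polygon tetra by blast

end
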